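(* Let $|\nu|\le1$, $T>0$, $\gamma\in[0,1/4)$, and let $q:\mathbb{R}\to[0,\infty)$ satisfy $q(k)\le C_q\min\{1,k^{-2}\}$ for all $k$. Then there is $C>0$ such that for all $\varepsilon\in(0,1]$ \[ \sup_{S\in[0,T]}\int_{\mathbb{R}}q(k)|f(S,k)|^2(|k|^{2\gamma}+1)\,dk\le C(\varepsilon^2+\varepsilon^{1/2}). \]
   Context: $f(\tau,k)=e^{\tau\nu}\big[\chi_{(-1/\varepsilon,\infty)}(k)e^{-\tau(2+k\varepsilon)^2k^2}-e^{-4\tau k^2}\big]$ for $\tau\in[0,T]$, $k\in\mathbb{R}$. *)

theory Defs
  imports "HOL-Analysis.Analysis"
begin

definition fF :: "real \<Rightarrow> real \<Rightarrow> real \<Rightarrow> real \<Rightarrow> real" where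
  "fF \<epsilon> \<nu> \<tau> k = exp (\<tau> * \<nu>) *
     (indicator {-1/\<epsilon><..} k * exp (-\<tau> * (2 + k * \<epsilon>)^2 * k^2) - exp (-4 * \<tau> * k^2))"

end

theory Submission
  imports Defs
begin


lemma exp_diff_le:
  fixes x y :: real assumes "0 \<le> x" "x \<le> y"
  shows "exp (-x) - exp (-y) \<le> exp (-x) * (y - x)"
proof -
  have "exp (-y) = exp (-x) * exp (-(y-x))" by (simp add: exp_add[symmetric])
  moreover have "exp (-(y-x)) \<ge> 1 - (y - x)" using exp_ge_add_one_self[of "x-y"] by (simp add: algebra_simps)
  ultimately have "exp (-y) \<ge> exp (-x) * (1 - (y-x))"
    by (metis exp_gt_zero mult_left_mono less_imp_le)
  thus ?thesis by (simp add: algebra_simps)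
qed

lemma exp_u_le:
  fixes u c :: real assumes "0 \<le> u" "0 < c"
  shows "exp (-(c*u)) * u \<le> 1/c"
proof -
  have "exp (c*u) \<ge> 1 + c*u" by (rule exp_ge_add_one_self)
  hence "c*u \<le> exp (c*u)" by linarith
  hence "u \<le> exp (c*u) / c" using assms by (simp add: field_simps)
  thus ?thesis by (simp add: exp_minus field_simps)
qed

lemma g_bound:
  fixes \<epsilon> S k :: real assumes "0 < \<epsilon>" "0 \<le> S"
  defines "g \<equiv> indicator {-1/\<epsilon><..} k * exp (-S * (2 + k * \<epsilon>)^2 * k^2) - exp (-4 * S * k^2)"
  shows "\<bar>g\<bar> \<le> 1 \<and> \<bar>g\<bar> \<le> 4 * \<bar>k\<bar> * \<epsilon>"
proof (cases "k > -1/\<epsilon>")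
  case False
  hence "k * \<epsilon> \<le> -1" using assms(1) by (simp add: field_simps)
  moreover have "k < 0" using \<open>k * \<epsilon> \<le> -1\<close> assms(1) by (smt (verit) mult_nonneg_nonneg)
  ultimately have "4 * \<bar>k\<bar> * \<epsilon> \<ge> 1" using assms(1) by simp
  moreover have "\<bar>g\<bar> \<le> 1" using False assms(2) by (simp add: g_def)
  ultimately show ?thesis by linarith
next
  case True
  hence ke: "k * \<epsilon> > -1" using assms(1) by (simp add: field_simps)
  define a where "a = S * ((2 + k*\<epsilon>)^2 * k^2)"
  define b where "b = S * (4 * k^2)"
  have g: "g = exp (-a) - exp (-b)" using True by (simp add: g_def a_def b_def mult.assoc)
  have a0: "a \<ge> 0" "b \<ge> 0" using assms(2) by (auto simp: a_def b_def)
  have e1: "exp (-a) \<le> 1" "exp (-b) \<le> 1" using a0 by auto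
  have g1: "\<bar>g\<bar> \<le> 1" using e1 g by (smt (verit) exp_gt_zero)
  have "\<bar>g\<bar> \<le> 4 * \<bar>k\<bar> * \<epsilon>"
  proof (cases "k \<ge> 0")
    case k: True
    show ?thesis
    proof (cases "k * \<epsilon> \<ge> 1/4")
      case True thus ?thesis using g1 k by simp
    next
      case False
      have ab: "a - b = S*k^2 * (k*\<epsilon>) * (4 + k*\<epsilon>)" by (simp add: a_def b_def power2_eq_square algebra_simps)
      have "a - b \<le> S*k^2 * (k*\<epsilon>) * 5" unfolding ab using False k assms
        by (intro mult_left_mono) auto
      hence ba: "b \<le> a" "a - b \<le> 5 * (k*\<epsilon>) * (S*k^2)" using ab k assms by (auto simp: algebra_simps)
      have "\<bar>g\<bar> = exp (-b) - exp (-a)" using g ba exp_le_cancel_iff[of "-a" "-b"] by auto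
      also have "\<dots> \<le> exp (-b) * (a - b)" using exp_diff_le a0 ba by simp
      also have "\<dots> \<le> exp (-b) * (5 * (k*\<epsilon>) * (S*k^2))" using ba by (simp add: mult_left_mono)
      also have "\<dots> = 5 * (k*\<epsilon>) * (exp (-(4 * (S*k^2))) * (S*k^2))" by (simp add: b_def algebra_simps)
      also have "\<dots> \<le> 5 * (k*\<epsilon>) * (1/4)"
        using exp_u_le[of "S*k^2" 4] assms k by (intro mult_left_mono) auto
      finally have "\<bar>g\<bar> \<le> 5 * (k*\<epsilon>) * (1/4)" .
      moreover have "k*\<epsilon> \<ge> 0" using k assms by simp
      ultimately show ?thesis using k by simp
    qed
  next
    case k: False
    have bma: "b - a = S*k^2 * (-(k*\<epsilon>)) * (4 + k*\<epsilon>)" by (simp add: a_def b_def power2_eq_square algebra_simps)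
    have kn: "-(k*\<epsilon>) \<ge> 0" using k assms by (simp add: mult_nonpos_nonneg)
    have nn: "S*k^2 * (-(k*\<epsilon>)) \<ge> 0" using kn assms by (intro mult_nonneg_nonneg) auto
    have "b - a \<le> S*k^2 * (-(k*\<epsilon>)) * 4" unfolding bma using ke kn
      by (intro mult_left_mono[OF _ nn]) auto
    moreover have "b - a \<ge> 0" unfolding bma by (rule mult_nonneg_nonneg[OF nn]) (use ke in auto)
    moreover have kk: "\<bar>k\<bar> = -k" using k by simp
    ultimately have ba: "a \<le> b" "b - a \<le> 4 * (\<bar>k\<bar>*\<epsilon>) * (S*k^2)"
      unfolding kk by (auto simp: algebra_simps)
    have sq: "(2 + k*\<epsilon>)^2 \<ge> 1" using ke kn by (simp add: power2_eq_square) (smt (verit) mult_le_cancel_right1)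
    have aS: "a \<ge> S*k^2" unfolding a_def using sq assms
      by (metis mult.commute mult_left_mono mult_right_mono mult_1_left zero_le_power2 mult_nonneg_nonneg)
    have "\<bar>g\<bar> = exp (-a) - exp (-b)" using g ba by auto
    also have "\<dots> \<le> exp (-a) * (b - a)" using exp_diff_le a0 ba by simp
    also have "\<dots> \<le> exp (-(S*k^2)) * (4 * (\<bar>k\<bar>*\<epsilon>) * (S*k^2))"
      using ba aS by (intro mult_mono) auto
    also have "\<dots> = 4 * (\<bar>k\<bar>*\<epsilon>) * (exp (-(1 * (S*k^2))) * (S*k^2))" by (simp add: algebra_simps)
    also have "\<dots> \<le> 4 * (\<bar>k\<bar>*\<epsilon>) * (1/1)"
      using exp_u_le[of "S*k^2" 1] assms by (intro mult_left_mono) auto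
    finally show ?thesis by simp
  qed
  with g1 show ?thesis by simp
qed



definition G1 :: "real \<Rightarrow> real \<Rightarrow> real" where
  "G1 p x = (if 1 \<le> x then x powr p else 0)"

lemma G1_nonneg: "G1 p x \<ge> 0" by (simp add: G1_def)

lemma G1_meas[measurable]: "G1 p \<in> borel_measurable borel"
  unfolding G1_def by measurable

lemma G1_nn:
  assumes "p < -1"
  shows "(\<integral>\<^sup>+x. ennreal (G1 p x) \<partial>lborel) = ennreal (-1/(p+1))"
proof -
  have "((\<lambda>x. x powr p) has_integral -(1 powr (p+1)) / (p+1)) {1..}"
    using has_integral_powr_to_inf[of p 1] assms by simp
  hence "((\<lambda>x. if x \<in> {1..} then x powr p else 0) has_integral -(1 powr (p+1)) / (p+1)) UNIV"
    by (simp only: has_integral_restrict_UNIV)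
  hence "(G1 p has_integral -1/(p+1)) UNIV"
    by (simp add: G1_def[abs_def])
  thus ?thesis by (intro nn_integral_has_integral_lborel G1_meas G1_nonneg)
qed

lemma G1_nn_ref:
  assumes "p < -1"
  shows "(\<integral>\<^sup>+x. ennreal (G1 p (-x)) \<partial>lborel) = ennreal (-1/(p+1))"
proof -
  have "(\<integral>\<^sup>+x. ennreal (G1 p x) \<partial>lborel) = (\<integral>\<^sup>+x. ennreal (G1 p (0 + (-1) * x)) \<partial>lborel)"
    using nn_integral_real_affine[of "\<lambda>x. ennreal (G1 p x)" "-1" 0] by simp
  thus ?thesis using G1_nn[OF assms] by simp
qed

definition Gt :: "real \<Rightarrow> real \<Rightarrow> real" where
  "Gt p x = G1 p x + G1 p (-x) + indicator {-1..1} x"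

lemma Gt_nn:
  assumes "p < -1"
  shows "(\<integral>\<^sup>+x. ennreal (Gt p x) \<partial>lborel) = ennreal (2 * (-1/(p+1)) + 2)"
proof -
  have pos: "-1/(p+1) \<ge> 0" using assms by (simp add: divide_nonpos_neg)
  have "(\<integral>\<^sup>+x. ennreal (Gt p x) \<partial>lborel) =
     (\<integral>\<^sup>+x. (ennreal (G1 p x) + ennreal (G1 p (-x))) + (indicator {-1..1} x :: ennreal) \<partial>lborel)"
    unfolding Gt_def by (intro nn_integral_cong) (simp add: G1_nonneg ennreal_plus split: split_indicator)
  also have "\<dots> = (\<integral>\<^sup>+x. ennreal (G1 p x) + ennreal (G1 p (-x)) \<partial>lborel) + (\<integral>\<^sup>+x. (indicator {-1..1::real} x :: ennreal) \<partial>lborel)"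
    using nn_integral_add[of "\<lambda>x. ennreal (G1 p x) + ennreal (G1 p (-x))" lborel "indicator {-1..1}"] by simp
  also have "(\<integral>\<^sup>+x. ennreal (G1 p x) + ennreal (G1 p (-x)) \<partial>lborel) =
       (\<integral>\<^sup>+x. ennreal (G1 p x) \<partial>lborel) + (\<integral>\<^sup>+x. ennreal (G1 p (-x)) \<partial>lborel)"
    using nn_integral_add[of "\<lambda>x. ennreal (G1 p x)" lborel "\<lambda>x. ennreal (G1 p (-x))"] by simp
  also have "(\<integral>\<^sup>+x. (indicator {-1..1::real} x :: ennreal) \<partial>lborel) = ennreal 2"
    by (simp add: nn_integral_indicator)
  finally have X: "(\<integral>\<^sup>+x. ennreal (Gt p x) \<partial>lborel) = ennreal (- 1 / (p + 1)) + ennreal (- 1 / (p + 1)) + ennreal 2"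
    using G1_nn[OF assms] G1_nn_ref[OF assms] by simp
  have "ennreal (2 * (-1/(p+1)) + 2) = ennreal (- 1 / (p + 1)) + ennreal (- 1 / (p + 1)) + ennreal 2"
  proof -
    have "ennreal (2 * (-1/(p+1)) + 2) = ennreal (2 * (-1/(p+1))) + ennreal 2"
      using pos by (intro ennreal_plus) auto
    also have "ennreal (2 * (-1/(p+1))) = ennreal (- 1 / (p + 1)) + ennreal (- 1 / (p + 1))"
      using pos by (subst ennreal_plus[symmetric]) auto
    finally show ?thesis .
  qed
  with X show ?thesis by simp
qed



lemma W_bound:
  fixes q :: "real \<Rightarrow> real" and \<gamma> Cq k :: real
  assumes "0 \<le> \<gamma>" "\<gamma> < 1/4" "\<And>k. q k \<ge> 0" "q 0 \<le> Cq"
    "\<And>k. k \<noteq> 0 \<Longrightarrow> q k \<le> Cq * min 1 (1 / k^2)"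
  shows "q k * (\<bar>k\<bar> powr (2*\<gamma>) + 1) * sqrt \<bar>k\<bar> \<le> 2 * Cq * Gt (2*\<gamma> - 3/2) k"
proof -
  have Cq: "Cq \<ge> 0" using assms(3)[of 0] assms(4) by simp
  have Gnn: "G1 p x \<ge> 0" for p x by (simp add: G1_def)
  show ?thesis
  proof (cases "\<bar>k\<bar> \<le> 1")
    case True
    have qk: "q k \<le> Cq"
    proof (cases "k = 0")
      case True thus ?thesis using assms by simp
    next
      case False
      hence "q k \<le> Cq * min 1 (1/k^2)" using assms by simp
      also have "\<dots> \<le> Cq * 1" using Cq by (intro mult_left_mono) auto
      finally show ?thesis by simp
    qed
    have "\<bar>k\<bar> powr (2*\<gamma>) \<le> 1" using True assms by (intro powr_le1) auto
    hence w: "\<bar>k\<bar> powr (2*\<gamma>) + 1 \<le> 2" by simp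
    have s: "sqrt \<bar>k\<bar> \<le> 1" using True by simp
    have "q k * (\<bar>k\<bar> powr (2*\<gamma>) + 1) * sqrt \<bar>k\<bar> \<le> Cq * 2 * 1"
      using qk w s assms(3)[of k] Cq by (intro mult_mono) auto
    also have "\<dots> \<le> 2 * Cq * Gt (2*\<gamma> - 3/2) k"
    proof -
      have "Gt (2*\<gamma> - 3/2) k \<ge> 1" using True Gnn unfolding Gt_def
        by (simp add: indicator_def abs_le_iff)
      thus ?thesis using Cq mult_left_mono[of 1 "Gt (2*\<gamma> - 3/2) k" Cq] by simp
    qed
    finally show ?thesis .
  next
    case False
    hence k0: "k \<noteq> 0" and ak: "\<bar>k\<bar> > 1" by auto
    have k2: "k^2 > 1" using ak one_less_power[of "\<bar>k\<bar>" 2] by simp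
    hence "1/k^2 \<le> 1" by (simp add: divide_le_eq)
    hence "min 1 (1/k^2) = 1/k^2" by simp
    moreover have p2: "\<bar>k\<bar> powr 2 = k^2" using ak by (simp add: powr_numeral)
    ultimately have qk: "q k \<le> Cq / \<bar>k\<bar> powr 2" using assms(5)[OF k0] 
      by simp
    have "\<bar>k\<bar> powr (2*\<gamma>) \<ge> 1" using ak assms by (intro ge_one_powr_ge_zero) auto
    hence w: "\<bar>k\<bar> powr (2*\<gamma>) + 1 \<le> 2 * \<bar>k\<bar> powr (2*\<gamma>)" by simp
    have s: "sqrt \<bar>k\<bar> = \<bar>k\<bar> powr (1/2)" by (simp add: powr_half_sqrt)
    have "q k * (\<bar>k\<bar> powr (2*\<gamma>) + 1) * sqrt \<bar>k\<bar> \<le> (Cq / \<bar>k\<bar> powr 2) * (2 * \<bar>k\<bar> powr (2*\<gamma>)) * \<bar>k\<bar> powr (1/2)"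
      unfolding s using qk w assms(3)[of k] Cq by (intro mult_mono) auto
    also have "\<dots> = 2 * Cq * \<bar>k\<bar> powr (2*\<gamma> - 3/2)"
    proof -
      have "\<bar>k\<bar> powr (2*\<gamma> - 3/2) = \<bar>k\<bar> powr ((2*\<gamma> + 1/2) - 2)" by simp
      also have "\<dots> = \<bar>k\<bar> powr (2*\<gamma>) * \<bar>k\<bar> powr (1/2) / \<bar>k\<bar> powr 2"
        by (simp only: powr_diff powr_add)
      finally have e: "\<bar>k\<bar> powr (2*\<gamma> - 3/2) = \<bar>k\<bar> powr (2*\<gamma>) * \<bar>k\<bar> powr (1/2) / \<bar>k\<bar> powr 2" .
      show ?thesis unfolding e using ak by (simp add: field_simps)
    qed
    also have "\<dots> \<le> 2 * Cq * Gt (2*\<gamma> - 3/2) k"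
    proof -
      have "Gt (2*\<gamma> - 3/2) k \<ge> \<bar>k\<bar> powr (2*\<gamma> - 3/2)" using ak Gnn unfolding Gt_def
        by (cases "k \<ge> 0") (auto simp: G1_def indicator_def)
      thus ?thesis using Cq by (simp add: mult_left_mono)
    qed
    finally show ?thesis .
  qed
qed



lemma Gt_meas[measurable]: "Gt p \<in> borel_measurable borel"
  unfolding Gt_def[abs_def] by measurable

lemma Gt_nonneg: "Gt p x \<ge> 0" unfolding Gt_def by (simp add: G1_nonneg)

theorem mainTheorem15:
  fixes \<nu> T \<gamma> Cq :: real and q :: "real \<Rightarrow> real"
  assumes "\<bar>\<nu>\<bar> \<le> 1" and "T > 0" and "0 \<le> \<gamma>" and "\<gamma> < 1/4"
    and "q \<in> borel_measurable borel"
    and "\<And>k. q k \<ge> 0"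
    and "q 0 \<le> Cq"
    and "\<And>k. k \<noteq> 0 \<Longrightarrow> q k \<le> Cq * min 1 (1 / k^2)"
  shows "\<exists>C>0. \<forall>\<epsilon>. 0 < \<epsilon> \<and> \<epsilon> \<le> 1 \<longrightarrow>
           (\<forall>S\<in>{0..T}. (LINT k|lborel. q k * \<bar>fF \<epsilon> \<nu> S k\<bar>^2 * (\<bar>k\<bar> powr (2*\<gamma>) + 1))
              \<le> C * (\<epsilon>^2 + \<epsilon> powr (1/2)))"
proof -
  have Cq: "Cq \<ge> 0" using assms(6)[of 0] assms(7) by simp
  define p where "p = 2*\<gamma> - 3/2"
  have p: "p < -1" using assms(4) by (simp add: p_def)
  define I where "I = 2 * (-1/(p+1)) + 2"
  have "2/(p+1) < 0" using p by (intro divide_pos_neg) auto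
  moreover have "2*(-1/(p+1)) = -(2/(p+1))" by simp
  ultimately have I: "I > 0" unfolding I_def by linarith
  define K where "K = 4 * Cq * exp (2*T)"
  have K: "K \<ge> 0" using Cq by (simp add: K_def)
  define C where "C = K * I + 1"
  have KI: "K * I \<ge> 0" using K I by simp
  have C: "C > 0" using KI by (simp add: C_def)
  have main: "(LINT k|lborel. q k * \<bar>fF \<epsilon> \<nu> S k\<bar>^2 * (\<bar>k\<bar> powr (2*\<gamma>) + 1)) \<le> K * sqrt \<epsilon> * I"
    if e: "0 < \<epsilon>" "\<epsilon> \<le> 1" and S: "0 \<le> S" "S \<le> T" for \<epsilon> S
  proof -
    have pw: "q k * \<bar>fF \<epsilon> \<nu> S k\<bar>^2 * (\<bar>k\<bar> powr (2*\<gamma>) + 1) \<le> K * sqrt \<epsilon> * Gt p k" for k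
    proof -
      define g where "g = indicator {-1/\<epsilon><..} k * exp (-S * (2 + k * \<epsilon>)^2 * k^2) - exp (-4 * S * k^2)"
      have gb: "\<bar>g\<bar> \<le> 1" "\<bar>g\<bar> \<le> 4 * \<bar>k\<bar> * \<epsilon>" using g_bound[OF e(1) S(1), of k] unfolding g_def by auto
      have fg: "fF \<epsilon> \<nu> S k = exp (S*\<nu>) * g" unfolding fF_def g_def by simp
      have sn: "S * \<nu> \<le> T"
      proof -
        have "S * \<nu> \<le> S * \<bar>\<nu>\<bar>" using S by (intro mult_left_mono) auto
        also have "\<dots> \<le> S * 1" using S assms(1) by (intro mult_left_mono) auto
        finally show ?thesis using S by simp
      qed
      have ex: "exp (S*\<nu>)^2 \<le> exp (2*T)" using sn by (simp add: exp_double[symmetric])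
      have "(g^2)^2 \<le> 4 * \<bar>k\<bar> * \<epsilon>"
      proof -
        have "(g^2)^2 = \<bar>g\<bar>^4" by (simp add: power_even_abs_numeral flip: power_mult)
        also have "\<dots> \<le> \<bar>g\<bar>^1" using gb(1) by (intro power_decreasing) auto
        finally show ?thesis using gb(2) by simp
      qed
      hence "g^2 \<le> sqrt (4 * \<bar>k\<bar> * \<epsilon>)" by (intro real_le_rsqrt)
      also have "\<dots> = 2 * sqrt \<bar>k\<bar> * sqrt \<epsilon>" by (simp add: real_sqrt_mult)
      finally have g2: "g^2 \<le> 2 * sqrt \<bar>k\<bar> * sqrt \<epsilon>" .
      have "\<bar>fF \<epsilon> \<nu> S k\<bar>^2 = exp (S*\<nu>)^2 * g^2" unfolding fg by (simp add: power_mult_distrib)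
      also have "\<dots> \<le> exp (2*T) * (2 * sqrt \<bar>k\<bar> * sqrt \<epsilon>)" using ex g2 by (intro mult_mono) auto
      finally have f2: "\<bar>fF \<epsilon> \<nu> S k\<bar>^2 \<le> exp (2*T) * (2 * sqrt \<bar>k\<bar> * sqrt \<epsilon>)" .
      have wn: "\<bar>k\<bar> powr (2*\<gamma>) + 1 \<ge> 0" by (smt (verit) powr_ge_zero)
      have "q k * \<bar>fF \<epsilon> \<nu> S k\<bar>^2 * (\<bar>k\<bar> powr (2*\<gamma>) + 1) \<le> q k * (exp (2*T) * (2 * sqrt \<bar>k\<bar> * sqrt \<epsilon>)) * (\<bar>k\<bar> powr (2*\<gamma>) + 1)"
        using f2 assms(6)[of k] wn by (intro mult_right_mono mult_left_mono) auto
      also have "\<dots> = (2 * exp (2*T) * sqrt \<epsilon>) * (q k * (\<bar>k\<bar> powr (2*\<gamma>) + 1) * sqrt \<bar>k\<bar>)" by (simp add: algebra_simps)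
      also have "\<dots> \<le> (2 * exp (2*T) * sqrt \<epsilon>) * (2 * Cq * Gt (2*\<gamma> - 3/2) k)"
        using W_bound[OF assms(3,4,6,7,8)] e by (intro mult_left_mono) auto
      also have "\<dots> = K * sqrt \<epsilon> * Gt p k" by (simp add: K_def p_def algebra_simps)
      finally show ?thesis .
    qed
    have "(\<integral>\<^sup>+k. ennreal (q k * \<bar>fF \<epsilon> \<nu> S k\<bar>^2 * (\<bar>k\<bar> powr (2*\<gamma>) + 1)) \<partial>lborel)
        \<le> (\<integral>\<^sup>+k. ennreal (K * sqrt \<epsilon>) * ennreal (Gt p k) \<partial>lborel)"
    proof (intro nn_integral_mono)
      fix x :: real
      have "ennreal (q x * \<bar>fF \<epsilon> \<nu> S x\<bar>^2 * (\<bar>x\<bar> powr (2*\<gamma>) + 1)) \<le> ennreal (K * sqrt \<epsilon> * Gt p x)"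
        using pw[of x] by (rule ennreal_leI)
      also have "\<dots> = ennreal (K * sqrt \<epsilon>) * ennreal (Gt p x)" using K e Gt_nonneg by (intro ennreal_mult) auto
      finally show "ennreal (q x * \<bar>fF \<epsilon> \<nu> S x\<bar>^2 * (\<bar>x\<bar> powr (2*\<gamma>) + 1)) \<le> ennreal (K * sqrt \<epsilon>) * ennreal (Gt p x)" .
    qed
    also have "\<dots> = ennreal (K * sqrt \<epsilon>) * (\<integral>\<^sup>+k. ennreal (Gt p k) \<partial>lborel)"
      by (rule nn_integral_cmult) measurable
    also have "\<dots> = ennreal (K * sqrt \<epsilon>) * ennreal I" using Gt_nn[OF p] by (simp only: I_def)
    also have "\<dots> = ennreal (K * sqrt \<epsilon> * I)" using I by (rule ennreal_mult''[symmetric, OF less_imp_le])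
    finally show ?thesis using K I e by (intro integral_real_bounded) auto
  qed
  show ?thesis
  proof (intro exI[of _ C] conjI allI impI ballI)
    show "C > 0" by (rule C)
  next
    fix \<epsilon> S :: real assume e: "0 < \<epsilon> \<and> \<epsilon> \<le> 1" and S: "S \<in> {0..T}"
    have "(LINT k|lborel. q k * \<bar>fF \<epsilon> \<nu> S k\<bar>^2 * (\<bar>k\<bar> powr (2*\<gamma>) + 1)) \<le> K * sqrt \<epsilon> * I"
      using main e S by auto
    also have "\<dots> \<le> C * sqrt \<epsilon>" using K I e by (simp add: C_def algebra_simps)
    also have "\<dots> \<le> C * (\<epsilon>^2 + \<epsilon> powr (1/2))" using C e by (simp add: powr_half_sqrt)
    finally show "(LINT k|lborel. q k * \<bar>fF \<epsilon> \<nu> S k\<bar>^2 * (\<bar>k\<bar> powr (2*\<gamma>) + 1)) \<le> C * (\<epsilon>^2 + \<epsilon> powr (1/2))" .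
  qed
qed

end
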